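(* Under the setting and assumptions in the context (in particular $\lambda_t=c\,e^{-\gamma t}$ with $0<c<1$, $\gamma>0$, the state bound $|x_i(t)|\le\eta$, informative trust observations $E_{\mathcal L}>0>E_{\mathcal M}$, and connectedness of the subgraph induced by the legitimate agents), almost surely the legitimate agents' states converge to a common finite value: there exist almost surely finite random vectors $\tilde x^{\mathcal L},\tilde x^{\mathcal M}\in\mathbb R^{L}$ such that $$\lim_{t\to\infty} x^{\mathcal L}(t)=\mathbf 1\, v^\top(\tilde x^{\mathcal L}+\tilde x^{\mathcal M}),$$ where $v$ is the stochastic vector with $(\overline W^{\mathcal L})^{\infty}=\mathbf 1 v^\top$. Explicitly, writing $P^{\lambda}_{k_0}=\prod_{k=\max\{k_0,T_f\}}^{\infty}(1-\lambda_k)$ and $Q_{k_0}=\prod_{k=k_0}^{\max\{k_0,T_f\}-1}(1-\lambda_k)W^{\mathcal L}_k$ (ordered product, later factors on the left; empty product $=I$), one has $\tilde x^{\mathcal L}=P^{\lambda}_0Q_0x^{\mathcal L}(0)+\sum_{k=0}^{\infty}P^{\lambda}_{k+1}Q_{k+1}\lambda_k x^{\mathcal L}(0)$ and $\tilde x^{\mathcal M}=\sum_{k=0}^{T_f-1}P^{\lambda}_{k+1}Q_{k+1}(1-\lambda_k)W^{\mathcal M}_k x^{\mathcal M}(k)$.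
   Context: Agents $\mathcal V=\{1,\dots,N\}$ communicate over a fixed graph $\mathcal G=(\mathcal V,\mathcal E)$; $(i,j)\in\mathcal E$ means $j$ can send data to $i$, and $\mathcal N_i=\{j\in\mathcal V:(i,j)\in\mathcal E\}$ (with $i\notin\mathcal N_i$). Legitimate agents are $\mathcal L=\{1,\dots,L\}$, malicious agents $\mathcal M=\{L+1,\dots,N\}$, $M=N-L$. The subgraph induced by $\mathcal L$ is connected. $x_i(t)\in\mathbb R$ is agent $i$'s state, $x^{\mathcal L}(t)\in\mathbb R^L$, $x^{\mathcal M}(t)\in\mathbb R^M$ the stacked states; malicious states evolve arbitrarily. State bound: $\max_{i\in\mathcal V,t\ge0}|x_i(t)|\le\eta$. Nominal matrix $\overline W^{\mathcal L}\in\mathbb R^{L\times L}$: $[\overline W^{\mathcal L}]_{ij}=1/(|\mathcal N_i\cap\mathcal L|+1)$ if $j\in\mathcal N_i\cap\mathcal L$, $0$ if $j\notin\mathcal N_i\cup\{i\}$, and $[\overline W^{\mathcal L}]_{ii}=1-\sum_{j\in\mathcal N_i\cap\mathcal L}[\overline W^{\mathcal L}]_{ij}$. It is primitive and $(\overline W^{\mathcal L})^\infty=\mathbf 1v^\top$ for a stochastic vector $v$. Trust: for each $i\in\mathcal L$, $j\in\mathcal N_i$, $t\ge0$ an observation $\alpha_{ij}(t)\in[0,1]$ is available; for each pair the $\alpha_{ij}(t)$, $t\ge0$, are independent with a common mean, and $E_{\mathcal L}=\mathbb E[\alpha_{ij}]-1/2$ if $j\in\mathcal L$, $E_{\mathcal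 M}=\mathbb E[\alpha_{ij}]-1/2$ if $j\in\mathcal M$; assume $E_{\mathcal L}>0$, $E_{\mathcal M}<0$. Let $\beta_{ij}(t)=\sum_{s=0}^t(\alpha_{ij}(s)-1/2)$ and $\mathcal N_i(t)=\{j\in\mathcal N_i:\beta_{ij}(t)\ge0\}$. Weights: $w_{ij}(t)=1/(|\mathcal N_i(t)|+1)$ if $j\in\mathcal N_i(t)$, $0$ if $j\notin\mathcal N_i(t)\cup\{i\}$, $w_{ii}(t)=1-\sum_{j\in\mathcal N_i}w_{ij}(t)$. Protocol for $i\in\mathcal L$, $t\ge0$: $x_i(t+1)=\lambda_t x_i(0)+(1-\lambda_t)\sum_{j\in\mathcal N_i\cup\{i\}}w_{ij}(t)x_j(t)$, with $\lambda_t=c\,e^{-\gamma t}$, $0<c<1$, $\gamma>0$. $W^{\mathcal L}_t=[w_{ij}(t)]_{i,j\in\mathcal L}$, $W^{\mathcal M}_t=[w_{ij}(t)]_{i\in\mathcal L,j\in\mathcal M}$. $T_f$ is the (random) smallest time such that $W^{\mathcal L}_t=\overline W^{\mathcal L}$ for all $t\ge T_f$; it is finite almost surely. *)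

theory Defs
  imports "HOL-Probability.Probability"
begin

text \<open>Agents are indexed 0..N-1; legitimate agents are 0..L-1, malicious ones L..N-1.
  E i j means that agent j can send data to agent i.\<close>

definition nbrs :: "nat \<Rightarrow> (nat \<Rightarrow> nat \<Rightarrow> bool) \<Rightarrow> nat \<Rightarrow> nat set" where
  "nbrs N E i = {j. j < N \<and> E i j \<and> j \<noteq> i}"

text \<open>a i j s is the (realised) trust observation alpha_ij(s).\<close>
definition beta :: "(nat \<Rightarrow> nat \<Rightarrow> nat \<Rightarrow> real) \<Rightarrow> nat \<Rightarrow> nat \<Rightarrow> nat \<Rightarrow> real" where
  "beta a i j t = (\<Sum>s\<le>t. a i j s - 1/2)"

definition trusted :: "nat \<Rightarrow> (nat \<Rightarrow> nat \<Rightarrow> bool) \<Rightarrow> (nat \<Rightarrow> nat \<Rightarrow> nat \<Rightarrow> real)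
    \<Rightarrow> nat \<Rightarrow> nat \<Rightarrow> nat set" where
  "trusted N E a i t = {j \<in> nbrs N E i. beta a i j t \<ge> 0}"

definition woff :: "nat \<Rightarrow> (nat \<Rightarrow> nat \<Rightarrow> bool) \<Rightarrow> (nat \<Rightarrow> nat \<Rightarrow> nat \<Rightarrow> real)
    \<Rightarrow> nat \<Rightarrow> nat \<Rightarrow> nat \<Rightarrow> real" where
  "woff N E a i j t = (if j \<in> trusted N E a i t then 1 / (real (card (trusted N E a i t)) + 1) else 0)"

definition wt :: "nat \<Rightarrow> (nat \<Rightarrow> nat \<Rightarrow> bool) \<Rightarrow> (nat \<Rightarrow> nat \<Rightarrow> nat \<Rightarrow> real)
    \<Rightarrow> nat \<Rightarrow> nat \<Rightarrow> nat \<Rightarrow> real" where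
  "wt N E a i j t = (if j = i then 1 - (\<Sum>k\<in>nbrs N E i. woff N E a i k t) else woff N E a i j t)"

text \<open>Nominal matrix (entries for i, j < L).\<close>
definition Wbar :: "nat \<Rightarrow> nat \<Rightarrow> (nat \<Rightarrow> nat \<Rightarrow> bool) \<Rightarrow> nat \<Rightarrow> nat \<Rightarrow> real" where
  "Wbar N L E i j =
     (if j = i then 1 - (\<Sum>k\<in>nbrs N E i \<inter> {..<L}. 1 / (real (card (nbrs N E i \<inter> {..<L})) + 1))
      else if j \<in> nbrs N E i \<inter> {..<L} then 1 / (real (card (nbrs N E i \<inter> {..<L})) + 1) else 0)"

definition Tf :: "nat \<Rightarrow> nat \<Rightarrow> (nat \<Rightarrow> nat \<Rightarrow> bool) \<Rightarrow> (nat \<Rightarrow> nat \<Rightarrow> nat \<Rightarrow> real) \<Rightarrow> nat" where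
  "Tf N L E a = (LEAST T. \<forall>t\<ge>T. \<forall>i<L. \<forall>j<L. wt N E a i j t = Wbar N L E i j)"

definition lam :: "real \<Rightarrow> real \<Rightarrow> nat \<Rightarrow> real" where
  "lam c \<gamma> t = c * exp (- \<gamma> * real t)"

text \<open>L x L matrices and L-vectors as functions on indices below L.\<close>
definition mat_mult :: "nat \<Rightarrow> (nat \<Rightarrow> nat \<Rightarrow> real) \<Rightarrow> (nat \<Rightarrow> nat \<Rightarrow> real) \<Rightarrow> nat \<Rightarrow> nat \<Rightarrow> real" where
  "mat_mult L A B i j = (\<Sum>k<L. A i k * B k j)"

definition mat_vec :: "nat \<Rightarrow> (nat \<Rightarrow> nat \<Rightarrow> real) \<Rightarrow> (nat \<Rightarrow> real) \<Rightarrow> nat \<Rightarrow> real" where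
  "mat_vec L A x i = (\<Sum>k<L. A i k * x k)"

definition mat_id :: "nat \<Rightarrow> nat \<Rightarrow> real" where
  "mat_id i j = (if i = j then 1 else 0)"

fun matpow :: "nat \<Rightarrow> (nat \<Rightarrow> nat \<Rightarrow> real) \<Rightarrow> nat \<Rightarrow> nat \<Rightarrow> nat \<Rightarrow> real" where
  "matpow L A 0 = mat_id"
| "matpow L A (Suc n) = mat_mult L A (matpow L A n)"

fun oprod :: "nat \<Rightarrow> (nat \<Rightarrow> nat \<Rightarrow> nat \<Rightarrow> real) \<Rightarrow> nat \<Rightarrow> nat \<Rightarrow> nat \<Rightarrow> nat \<Rightarrow> real" where
  "oprod L F a 0 = mat_id"
| "oprod L F a (Suc n) = mat_mult L (F (a + n)) (oprod L F a n)"

definition Plam :: "real \<Rightarrow> real \<Rightarrow> nat \<Rightarrow> nat \<Rightarrow> real" where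
  "Plam c \<gamma> T k0 = (\<Prod>n. 1 - lam c \<gamma> (n + max k0 T))"

definition Qm :: "nat \<Rightarrow> nat \<Rightarrow> (nat \<Rightarrow> nat \<Rightarrow> bool) \<Rightarrow> (nat \<Rightarrow> nat \<Rightarrow> nat \<Rightarrow> real)
    \<Rightarrow> real \<Rightarrow> real \<Rightarrow> nat \<Rightarrow> nat \<Rightarrow> nat \<Rightarrow> nat \<Rightarrow> real" where
  "Qm N L E a c \<gamma> T k0 =
     oprod L (\<lambda>k i j. (1 - lam c \<gamma> k) * wt N E a i j k) k0 (max k0 T - k0)"

text \<open>The k-th summand of tilde x^L (component i); x0 = x^L(0).\<close>
definition xtL_term :: "nat \<Rightarrow> nat \<Rightarrow> (nat \<Rightarrow> nat \<Rightarrow> bool) \<Rightarrow> (nat \<Rightarrow> nat \<Rightarrow> nat \<Rightarrow> real)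
    \<Rightarrow> real \<Rightarrow> real \<Rightarrow> (nat \<Rightarrow> real) \<Rightarrow> nat \<Rightarrow> nat \<Rightarrow> real" where
  "xtL_term N L E a c \<gamma> x0 i k =
     (let T = Tf N L E a in
      Plam c \<gamma> T (k + 1) * mat_vec L (Qm N L E a c \<gamma> T (k + 1)) (\<lambda>j. lam c \<gamma> k * x0 j) i)"

definition xtilde_L :: "nat \<Rightarrow> nat \<Rightarrow> (nat \<Rightarrow> nat \<Rightarrow> bool) \<Rightarrow> (nat \<Rightarrow> nat \<Rightarrow> nat \<Rightarrow> real)
    \<Rightarrow> real \<Rightarrow> real \<Rightarrow> (nat \<Rightarrow> real) \<Rightarrow> nat \<Rightarrow> real" where
  "xtilde_L N L E a c \<gamma> x0 i =
     (let T = Tf N L E a in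
      Plam c \<gamma> T 0 * mat_vec L (Qm N L E a c \<gamma> T 0) x0 i
      + (\<Sum>k. xtL_term N L E a c \<gamma> x0 i k))"

text \<open>xs j k is the state of (malicious) agent j at time k.\<close>
definition xtilde_M :: "nat \<Rightarrow> nat \<Rightarrow> (nat \<Rightarrow> nat \<Rightarrow> bool) \<Rightarrow> (nat \<Rightarrow> nat \<Rightarrow> nat \<Rightarrow> real)
    \<Rightarrow> real \<Rightarrow> real \<Rightarrow> (nat \<Rightarrow> nat \<Rightarrow> real) \<Rightarrow> nat \<Rightarrow> real" where
  "xtilde_M N L E a c \<gamma> xs i =
     (let T = Tf N L E a in
      (\<Sum>k<T. Plam c \<gamma> T (k + 1) * mat_vec L (Qm N L E a c \<gamma> T (k + 1))
          (\<lambda>l. (1 - lam c \<gamma> k) * (\<Sum>m\<in>{L..<N}. wt N E a l m k * xs m k)) i))"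

end

theory Submission
  imports Defs
begin

lemma hoeff_pos:
  fixes X :: "nat \<Rightarrow> 'a \<Rightarrow> real" and e :: real
  assumes P: "prob_space M"
    and meas: "\<And>t. X t \<in> borel_measurable M"
    and rng: "\<And>t \<omega>. \<omega> \<in> space M \<Longrightarrow> 0 \<le> X t \<omega> \<and> X t \<omega> \<le> 1"
    and ind: "prob_space.indep_vars M (\<lambda>_. borel) X UNIV"
    and mean: "\<And>t. prob_space.expectation M (X t) - 1/2 = e"
    and e: "e > 0"
  shows "AE \<omega> in M. eventually (\<lambda>n. (\<Sum>s\<le>n. X s \<omega> - 1/2) > 0) sequentially"
proof -
  interpret prob_space M by (rule P)
  define A where "A n = {\<omega>\<in>space M. (\<Sum>s\<in>{..n}. X s \<omega>) \<le> (\<Sum>s\<in>{..n}. expectation (X s)) - (real n + 1) * e}" for n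
  have pb: "prob (A n) \<le> exp (-2 * e\<^sup>2) ^ (Suc n)" for n
  proof -
    interpret H: Hoeffding_ineq M "{..n}" X "\<lambda>_. 0" "\<lambda>_. 1" "(\<Sum>s\<in>{..n}. expectation (X s))"
    proof unfold_locales
      show "indep_vars (\<lambda>_. borel) X {..n}" using ind indep_vars_subset by blast
      show "AE x in M. X i x \<in> {0..1}" for i using rng by auto
    qed auto
    have "prob (A n) \<le> exp (-2 * ((real n + 1) * e)\<^sup>2 / (\<Sum>i\<in>{..n}. (1 - 0)\<^sup>2))"
      unfolding A_def by (rule H.Hoeffding_ineq_le) (use e in auto)
    also have "-2 * ((real n + 1) * e)\<^sup>2 / (\<Sum>i\<in>{..n}. (1 - 0)\<^sup>2) = real (Suc n) * (-2 * e\<^sup>2)"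
      by (simp add: power2_eq_square field_simps)
    also have "exp (real (Suc n) * (-2 * e\<^sup>2)) = exp (-2 * e\<^sup>2) ^ (Suc n)"
      by (rule exp_of_nat_mult)
    finally show ?thesis .
  qed
  have sA: "A n \<in> sets M" for n unfolding A_def using meas by measurable
  have "summable (\<lambda>n. measure M (A n))"
  proof (rule summable_comparison_test[where g="\<lambda>n. exp (-2 * e\<^sup>2) ^ (Suc n)"])
    show "\<exists>N. \<forall>n\<ge>N. norm (measure M (A n)) \<le> exp (-2 * e\<^sup>2) ^ Suc n" using pb by auto
    have "exp (-2 * e\<^sup>2) < 1" using e by simp
    then show "summable (\<lambda>n. exp (-2 * e\<^sup>2) ^ Suc n)"
      by (simp add: summable_geometric)
  qed
  from borel_cantelli_AE1[OF sA _ this]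
  have "AE \<omega> in M. eventually (\<lambda>n. \<omega> \<in> space M - A n) sequentially" by (simp add: less_top[symmetric])
  then show ?thesis
  proof (rule AE_mp, intro AE_I2 impI)
    fix \<omega> assume "\<omega> \<in> space M" and ev: "eventually (\<lambda>n. \<omega> \<in> space M - A n) sequentially"
    show "eventually (\<lambda>n. (\<Sum>s\<le>n. X s \<omega> - 1/2) > 0) sequentially"
      using ev
    proof eventually_elim
      case (elim n)
      then have "(\<Sum>s\<in>{..n}. X s \<omega>) > (\<Sum>s\<in>{..n}. expectation (X s)) - (real n + 1) * e"
        unfolding A_def by auto
      moreover have "(\<Sum>s\<in>{..n}. expectation (X s)) = (real n + 1) * (e + 1/2)"
        using mean by (simp add: algebra_simps)
      ultimately show ?case by (simp add: sum_subtractf algebra_simps)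
    qed
  qed
qed

lemma hoeff_neg:
  fixes X :: "nat \<Rightarrow> 'a \<Rightarrow> real" and e :: real
  assumes P: "prob_space M"
    and meas: "\<And>t. X t \<in> borel_measurable M"
    and rng: "\<And>t \<omega>. \<omega> \<in> space M \<Longrightarrow> 0 \<le> X t \<omega> \<and> X t \<omega> \<le> 1"
    and ind: "prob_space.indep_vars M (\<lambda>_. borel) X UNIV"
    and mean: "\<And>t. prob_space.expectation M (X t) - 1/2 = e"
    and e: "e < 0"
  shows "AE \<omega> in M. eventually (\<lambda>n. (\<Sum>s\<le>n. X s \<omega> - 1/2) < 0) sequentially"
proof -
  interpret prob_space M by (rule P)
  have int: "integrable M (X t)" for t
  proof (rule integrable_const_bound[where B=1])
    show "AE x in M. norm (X t x) \<le> 1" using rng by (auto intro!: AE_I2 simp: abs_le_iff)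
  qed (use meas in auto)
  have "AE \<omega> in M. eventually (\<lambda>n. (\<Sum>s\<le>n. (\<lambda>t \<omega>. 1 - X t \<omega>) s \<omega> - 1/2) > 0) sequentially"
  proof (rule hoeff_pos[OF P, where e="-e"])
    show "indep_vars (\<lambda>_. borel) (\<lambda>t \<omega>. 1 - X t \<omega>) UNIV"
      by (rule indep_vars_compose2[OF ind]) auto
    show "expectation (\<lambda>\<omega>. 1 - X t \<omega>) - 1/2 = - e" for t
      using mean[of t] int[of t] by (simp add: prob_space)
  qed (use meas rng e in auto)
  then show ?thesis
    by (rule AE_mp) (auto intro!: AE_I2 elim: eventually_mono simp: sum_subtractf)
qed


lemma mat_vec_mult: "mat_vec L (mat_mult L A B) y i = mat_vec L A (\<lambda>j. mat_vec L B y j) i"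
  unfolding mat_vec_def mat_mult_def
  by (simp add: sum_distrib_left sum_distrib_right mult.assoc) (rule sum.swap)

lemma mat_vec_cong: "(\<And>j. j < L \<Longrightarrow> f j = g j) \<Longrightarrow> mat_vec L A f i = mat_vec L A g i"
  unfolding mat_vec_def by (intro sum.cong) auto

lemma mat_vec_id: "i < L \<Longrightarrow> mat_vec L mat_id y i = y i"
proof -
  assume i: "i < L"
  have "mat_vec L mat_id y i = (\<Sum>k<L. if i = k then y k else 0)"
    unfolding mat_vec_def mat_id_def by (intro sum.cong) auto
  then show ?thesis using i by simp
qed

lemma mat_vec_zero: "mat_vec L A (\<lambda>_. 0) i = 0"
  unfolding mat_vec_def by simp

lemma mat_vec_add: "mat_vec L A (\<lambda>j. f j + g j) i = mat_vec L A f i + mat_vec L A g i"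
  unfolding mat_vec_def by (simp add: distrib_left sum.distrib)

lemma finite_nbrs: "finite (nbrs N E i)"
  by (rule finite_subset[of _ "{..<N}"]) (auto simp: nbrs_def)

lemma trusted_sub: "trusted N E a i t \<subseteq> nbrs N E i"
  by (auto simp: trusted_def)

lemma sum_woff: "(\<Sum>k\<in>nbrs N E i. woff N E a i k t) = real (card (trusted N E a i t)) / (real (card (trusted N E a i t)) + 1)"
proof -
  let ?S = "trusted N E a i t"
  have "(\<Sum>k\<in>nbrs N E i. woff N E a i k t) = (\<Sum>k\<in>?S. 1 / (real (card ?S) + 1))"
    unfolding woff_def using trusted_sub[of N E a i t] finite_nbrs[of N E i]
    by (simp add: sum.If_cases Int_absorb1)
  then show ?thesis by simp
qed

lemma wt_diag: "wt N E a i i t = 1 / (real (card (trusted N E a i t)) + 1)"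
  unfolding wt_def sum_woff by (simp add: field_simps)

lemma wt_nonneg: "0 \<le> wt N E a i j t"
  by (cases "j = i") (auto simp: wt_diag, auto simp: wt_def woff_def)

lemma i_notin_nbrs: "i \<notin> nbrs N E i" by (simp add: nbrs_def)

lemma wt_zero: "j \<notin> insert i (nbrs N E i) \<Longrightarrow> wt N E a i j t = 0"
  using trusted_sub[of N E a i t] by (auto simp: wt_def woff_def)

lemma wt_sum: "(\<Sum>j\<in>insert i (nbrs N E i). wt N E a i j t) = 1"
proof -
  have "(\<Sum>j\<in>insert i (nbrs N E i). wt N E a i j t) = wt N E a i i t + (\<Sum>j\<in>nbrs N E i. woff N E a i j t)"
    using finite_nbrs[of N E i] i_notin_nbrs[of i N E]
    by (simp add: wt_def) (intro sum.cong, auto simp: i_notin_nbrs)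
  then show ?thesis unfolding wt_def sum_woff by simp
qed

lemma ins_sub: "i < N \<Longrightarrow> insert i (nbrs N E i) \<subseteq> {..<N}"
  by (auto simp: nbrs_def)

lemma wt_sumN_split: "i < N \<Longrightarrow> (\<Sum>j\<in>insert i (nbrs N E i). wt N E a i j t * f j) = (\<Sum>j<N. wt N E a i j t * f j)"
proof (rule sum.mono_neutral_left)
  show "\<forall>j\<in>{..<N} - insert i (nbrs N E i). wt N E a i j t * f j = 0" using wt_zero by auto
qed (auto simp: nbrs_def)

lemma wt_sumN: "i < N \<Longrightarrow> (\<Sum>j<N. wt N E a i j t) = 1"
  using wt_sumN_split[of i N E a t "\<lambda>_. 1"] wt_sum[of N E a i t] by simp

lemma mat_vec_sum: "finite K \<Longrightarrow> mat_vec L A (\<lambda>j. \<Sum>k\<in>K. f k j) i = (\<Sum>k\<in>K. mat_vec L A (f k) i)"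
  unfolding mat_vec_def by (simp add: sum_distrib_left) (rule sum.swap)

lemma mat_vec_scale: "mat_vec L A (\<lambda>j. r * f j) i = r * mat_vec L A f i"
  unfolding mat_vec_def by (simp add: sum_distrib_left mult_ac)

lemma lam_pos: "0 < c \<Longrightarrow> 0 < lam c \<gamma> t"
  by (simp add: lam_def)

lemma lam_lt1: "c < 1 \<Longrightarrow> 0 < \<gamma> \<Longrightarrow> lam c \<gamma> t < 1"
proof -
  assume "c < 1" "0 < \<gamma>"
  have e: "exp (- \<gamma> * real t) \<le> 1" "0 < exp (- \<gamma> * real t)" using \<open>0 < \<gamma>\<close> by simp_all
  show ?thesis
  proof (cases "c \<le> 0")
    case True then have "c * exp (- \<gamma> * real t) \<le> 0" using e by (simp add: mult_nonpos_nonneg)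
    then show ?thesis unfolding lam_def by simp
  next
    case False
    then have "c * exp (- \<gamma> * real t) \<le> c" using e by (simp add: mult_left_le_one_le)
    then show ?thesis unfolding lam_def using \<open>c < 1\<close> by simp
  qed
qed

lemma lam_geom: "lam c \<gamma> t = c * exp (- \<gamma>) ^ t"
  unfolding lam_def by (simp add: exp_of_nat_mult[symmetric] mult.commute)

lemma summable_lam: "0 < \<gamma> \<Longrightarrow> summable (lam c \<gamma>)"
  unfolding lam_geom by (intro summable_mult summable_geometric) simp

context
  fixes N L :: nat and E :: "nat \<Rightarrow> nat \<Rightarrow> bool" and a :: "nat \<Rightarrow> nat \<Rightarrow> nat \<Rightarrow> real"
    and c \<gamma> \<eta> :: real and x :: "nat \<Rightarrow> nat \<Rightarrow> real"
  assumes LN: "L \<le> N" and c0: "0 < c" and c1: "c < 1" and gam: "0 < \<gamma>"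
    and bound: "\<forall>i<N. \<forall>t. \<bar>x i t\<bar> \<le> \<eta>"
    and prot: "\<forall>i<L. \<forall>t. x i (Suc t) = lam c \<gamma> t * x i 0
          + (1 - lam c \<gamma> t) * (\<Sum>j\<in>insert i (nbrs N E i). wt N E a i j t * x j t)"
begin

definition "AA k i j = (1 - lam c \<gamma> k) * wt N E a i j k"
definition "GG s t y i = mat_vec L (oprod L AA s (t - s)) y i"
definition "uu k i = (1 - lam c \<gamma> k) * (\<Sum>m\<in>{L..<N}. wt N E a i m k * x m k)"

lemma GG_step: "s \<le> t \<Longrightarrow> GG s (Suc t) y i = mat_vec L (AA t) (\<lambda>j. GG s t y j) i"
proof -
  assume "s \<le> t"
  then have "Suc t - s = Suc (t - s)" "s + (t - s) = t" by auto
  then show ?thesis unfolding GG_def by (simp add: mat_vec_mult)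
qed

lemma GG_same: "i < L \<Longrightarrow> GG s s y i = y i"
  unfolding GG_def by (simp add: mat_vec_id)

lemma GG_cong: "(\<And>j. j < L \<Longrightarrow> y j = y' j) \<Longrightarrow> GG s t y i = GG s t y' i"
  unfolding GG_def by (rule mat_vec_cong)

lemma GG_zero: "GG s t (\<lambda>_. 0) i = 0"
  unfolding GG_def by (rule mat_vec_zero)

lemma AA_nonneg: "0 \<le> AA t i j"
  unfolding AA_def using lam_lt1[OF c1 gam, of t] wt_nonneg[of N E a i j t] by simp

lemma AA_rowsum: "i < L \<Longrightarrow> (\<Sum>j<L. AA t i j) \<le> 1"
proof -
  assume i: "i < L"
  have "(\<Sum>j<L. wt N E a i j t) \<le> (\<Sum>j<N. wt N E a i j t)"
    using LN by (intro sum_mono2) (auto simp: wt_nonneg)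
  also have "\<dots> = 1" using i LN by (intro wt_sumN) auto
  finally have "(\<Sum>j<L. wt N E a i j t) \<le> 1" .
  moreover have "(\<Sum>j<L. AA t i j) = (1 - lam c \<gamma> t) * (\<Sum>j<L. wt N E a i j t)"
    unfolding AA_def by (simp add: sum_distrib_left)
  moreover have "0 \<le> 1 - lam c \<gamma> t" "1 - lam c \<gamma> t \<le> 1"
    using lam_lt1[OF c1 gam, of t] lam_pos[OF c0, of \<gamma> t] by auto
  moreover have "0 \<le> (\<Sum>j<L. wt N E a i j t)" by (simp add: sum_nonneg wt_nonneg)
  ultimately show ?thesis
    by (simp add: mult_le_one)
qed

lemma AA_bound: assumes i: "i < L" and w: "\<And>j. j < L \<Longrightarrow> \<bar>w j\<bar> \<le> B"
  shows "\<bar>mat_vec L (AA t) w i\<bar> \<le> B"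
proof -
  have B: "0 \<le> B" using w[of 0] i by auto
  have "\<bar>mat_vec L (AA t) w i\<bar> \<le> (\<Sum>j<L. \<bar>AA t i j * w j\<bar>)"
    unfolding mat_vec_def by (rule sum_abs)
  also have "\<dots> \<le> (\<Sum>j<L. AA t i j * B)"
    by (intro sum_mono) (simp add: abs_mult AA_nonneg w mult_left_mono)
  also have "\<dots> = (\<Sum>j<L. AA t i j) * B" by (simp add: sum_distrib_right)
  also have "\<dots> \<le> B" using AA_rowsum[OF i] B by (simp add: mult_left_le_one_le sum_nonneg AA_nonneg)
  finally show ?thesis .
qed

lemma GG_bound: "i < L \<Longrightarrow> (\<And>j. j < L \<Longrightarrow> \<bar>y j\<bar> \<le> B) \<Longrightarrow> \<bar>GG s t y i\<bar> \<le> B"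
proof (induction t arbitrary: i)
  case 0
  then show ?case by (simp add: GG_def mat_vec_id)
next
  case (Suc t)
  show ?case
  proof (cases "s \<le> t")
    case True
    then show ?thesis using Suc by (simp add: GG_step AA_bound)
  next
    case False
    then have "Suc t - s = 0" by auto
    then show ?thesis using Suc by (simp add: GG_def mat_vec_id)
  qed
qed

lemma recur: "i < L \<Longrightarrow> x i (Suc t) = lam c \<gamma> t * x i 0 + mat_vec L (AA t) (\<lambda>j. x j t) i + uu t i"
proof -
  assume i: "i < L"
  have iN: "i < N" using i LN by auto
  have "(\<Sum>j<N. wt N E a i j t * x j t) = (\<Sum>j<L. wt N E a i j t * x j t) + (\<Sum>j\<in>{L..<N}. wt N E a i j t * x j t)"
  proof -
    show ?thesis using LN sum.atLeastLessThan_concat[of 0 L N "\<lambda>j. wt N E a i j t * x j t"]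
      by (simp add: lessThan_atLeast0)
  qed
  moreover have "mat_vec L (AA t) (\<lambda>j. x j t) i = (1 - lam c \<gamma> t) * (\<Sum>j<L. wt N E a i j t * x j t)"
    unfolding mat_vec_def AA_def by (simp add: sum_distrib_left mult_ac)
  ultimately show ?thesis using prot i wt_sumN_split[OF iN, of E a t "\<lambda>j. x j t"]
    unfolding uu_def by (simp add: distrib_left)
qed

lemma solution: "i < L \<Longrightarrow> x i t = GG 0 t (\<lambda>j. x j 0) i
   + (\<Sum>k<t. GG (Suc k) t (\<lambda>j. lam c \<gamma> k * x j 0) i) + (\<Sum>k<t. GG (Suc k) t (uu k) i)"
proof (induction t arbitrary: i)
  case 0
  then show ?case by (simp add: GG_same)
next
  case (Suc t)
  have "x i (Suc t) = lam c \<gamma> t * x i 0 + mat_vec L (AA t) (\<lambda>j. x j t) i + uu t i"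
    using recur[OF Suc.prems] .
  also have "mat_vec L (AA t) (\<lambda>j. x j t) i = mat_vec L (AA t) (\<lambda>j. GG 0 t (\<lambda>j. x j 0) j
   + (\<Sum>k<t. GG (Suc k) t (\<lambda>j. lam c \<gamma> k * x j 0) j) + (\<Sum>k<t. GG (Suc k) t (uu k) j)) i"
    by (rule mat_vec_cong) (rule Suc.IH)
  also have "\<dots> = GG 0 (Suc t) (\<lambda>j. x j 0) i
     + (\<Sum>k<t. GG (Suc k) (Suc t) (\<lambda>j. lam c \<gamma> k * x j 0) i) + (\<Sum>k<t. GG (Suc k) (Suc t) (uu k) i)"
    by (simp add: mat_vec_add mat_vec_sum GG_step)
  finally show ?case using Suc.prems by (simp add: GG_same)
qed


lemma AA_eq: "AA = (\<lambda>k i j. (1 - lam c \<gamma> k) * wt N E a i j k)"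
  by (intro ext) (simp add: AA_def)

lemma Qm_GG: "mat_vec L (Qm N L E a c \<gamma> T s) y j = GG s (max s T) y j"
  unfolding Qm_def GG_def AA_eq by simp

lemma wt_eq_Wbar:
  assumes tr: "trusted N E a i t = nbrs N E i \<inter> {..<L}" and j: "j < L"
  shows "wt N E a i j t = Wbar N L E i j"
proof (cases "j = i")
  case True
  have "(\<Sum>k\<in>nbrs N E i \<inter> {..<L}. 1 / (real (card (nbrs N E i \<inter> {..<L})) + 1))
        = real (card (nbrs N E i \<inter> {..<L})) / (real (card (nbrs N E i \<inter> {..<L})) + 1)" by simp
  then show ?thesis using True unfolding wt_def Wbar_def sum_woff tr by simp
next
  case False
  then show ?thesis unfolding wt_def Wbar_def woff_def tr by simp
qed

context
  fixes v :: "nat \<Rightarrow> real"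
  assumes ev: "\<forall>i<L. \<forall>j\<in>nbrs N E i. eventually (\<lambda>t. (j < L \<longrightarrow> 0 \<le> beta a i j t) \<and> (L \<le> j \<longrightarrow> beta a i j t < 0)) sequentially"
    and vlim: "\<forall>i<L. \<forall>j<L. (\<lambda>n. matpow L (Wbar N L E) n i j) \<longlonglongrightarrow> v j"
begin

lemma T0_ex: "\<exists>T0. \<forall>t\<ge>T0. \<forall>i<L. trusted N E a i t = nbrs N E i \<inter> {..<L}"
proof -
  have "eventually (\<lambda>t. \<forall>i\<in>{..<L}. \<forall>j\<in>nbrs N E i. (j < L \<longrightarrow> 0 \<le> beta a i j t) \<and> (L \<le> j \<longrightarrow> beta a i j t < 0)) sequentially"
    using ev by (intro eventually_ball_finite ballI finite_nbrs) (auto simp: finite_nbrs eventually_ball_finite_distrib)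
  then obtain T0 where T0: "\<And>t. t \<ge> T0 \<Longrightarrow> \<forall>i\<in>{..<L}. \<forall>j\<in>nbrs N E i. (j < L \<longrightarrow> 0 \<le> beta a i j t) \<and> (L \<le> j \<longrightarrow> beta a i j t < 0)"
    unfolding eventually_sequentially by blast
  show ?thesis
  proof (intro exI allI impI)
    fix t i assume "T0 \<le> t" "i < L"
    then have "\<forall>j\<in>nbrs N E i. (j < L \<longrightarrow> 0 \<le> beta a i j t) \<and> (L \<le> j \<longrightarrow> beta a i j t < 0)" using T0 by auto
    then show "trusted N E a i t = nbrs N E i \<inter> {..<L}"
      unfolding trusted_def by (auto simp: not_less)
  qed
qed

abbreviation "TT \<equiv> Tf N L E a"

lemma PT: "t \<ge> TT \<Longrightarrow> i < L \<Longrightarrow> j < L \<Longrightarrow> wt N E a i j t = Wbar N L E i j"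
proof -
  assume *: "t \<ge> TT" "i < L" "j < L"
  obtain T0 where T0: "\<forall>t\<ge>T0. \<forall>i<L. trusted N E a i t = nbrs N E i \<inter> {..<L}" using T0_ex by blast
  have "\<forall>t\<ge>T0. \<forall>i<L. \<forall>j<L. wt N E a i j t = Wbar N L E i j"
    using T0 wt_eq_Wbar by blast
  then have "\<forall>t\<ge>TT. \<forall>i<L. \<forall>j<L. wt N E a i j t = Wbar N L E i j"
    unfolding Tf_def by (rule LeastI)
  then show ?thesis using * by blast
qed

lemma Wbar_rowsum: "i < L \<Longrightarrow> (\<Sum>j<L. Wbar N L E i j) = 1"
proof -
  assume i: "i < L"
  obtain T0 where T0: "\<forall>t\<ge>T0. \<forall>i<L. trusted N E a i t = nbrs N E i \<inter> {..<L}" using T0_ex by blast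
  have tr: "trusted N E a i T0 = nbrs N E i \<inter> {..<L}" using T0 i by auto
  have "(\<Sum>j<N. wt N E a i j T0) = (\<Sum>j<L. wt N E a i j T0) + (\<Sum>j\<in>{L..<N}. wt N E a i j T0)"
    using LN sum.atLeastLessThan_concat[of 0 L N "\<lambda>j. wt N E a i j T0"] by (simp add: lessThan_atLeast0)
  moreover have "(\<Sum>j\<in>{L..<N}. wt N E a i j T0) = 0"
    using i tr by (intro sum.neutral) (auto simp: wt_def woff_def)
  moreover have "(\<Sum>j<L. wt N E a i j T0) = (\<Sum>j<L. Wbar N L E i j)"
    using tr by (intro sum.cong refl wt_eq_Wbar) auto
  ultimately show ?thesis using wt_sumN[of i N E a T0] i LN by simp
qed

lemma malzero: "t \<ge> TT \<Longrightarrow> i < L \<Longrightarrow> L \<le> m \<Longrightarrow> wt N E a i m t = 0"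
proof -
  assume t: "t \<ge> TT" and i: "i < L" and m: "L \<le> m"
  show ?thesis
  proof (cases "m < N")
    case False
    then show ?thesis using i m by (intro wt_zero) (auto simp: nbrs_def)
  next
    case True
    have "(\<Sum>j<N. wt N E a i j t) = (\<Sum>j<L. wt N E a i j t) + (\<Sum>j\<in>{L..<N}. wt N E a i j t)"
      using LN sum.atLeastLessThan_concat[of 0 L N "\<lambda>j. wt N E a i j t"] by (simp add: lessThan_atLeast0)
    moreover have "(\<Sum>j<L. wt N E a i j t) = 1"
      using Wbar_rowsum[OF i] PT[OF t i] by simp
    ultimately have "(\<Sum>j\<in>{L..<N}. wt N E a i j t) = 0" using wt_sumN[of i N E a t] i LN by simp
    then show ?thesis using True m by (subst (asm) sum_nonneg_eq_0_iff) (auto simp: wt_nonneg)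
  qed
qed

lemma uu_zero: "k \<ge> TT \<Longrightarrow> i < L \<Longrightarrow> uu k i = 0"
  unfolding uu_def by (simp add: malzero)

lemma AA_Wbar: "t \<ge> TT \<Longrightarrow> i < L \<Longrightarrow> mat_vec L (AA t) w i = (1 - lam c \<gamma> t) * mat_vec L (Wbar N L E) w i"
  unfolding mat_vec_def AA_def by (simp add: sum_distrib_left PT mult_ac)


lemma GG_far: "i < L \<Longrightarrow> GG s (n + max s TT) y i
   = (\<Prod>k<n. 1 - lam c \<gamma> (k + max s TT)) * mat_vec L (matpow L (Wbar N L E) n) (\<lambda>j. GG s (max s TT) y j) i"
proof (induction n arbitrary: i)
  case 0
  then show ?case by (simp add: mat_vec_id)
next
  case (Suc n)
  let ?m = "max s TT"
  let ?z = "\<lambda>j. GG s ?m y j"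
  have "GG s (Suc n + ?m) y i = mat_vec L (AA (n + ?m)) (\<lambda>j. GG s (n + ?m) y j) i"
    by (simp add: GG_step)
  also have "\<dots> = (1 - lam c \<gamma> (n + ?m)) * mat_vec L (Wbar N L E) (\<lambda>j. GG s (n + ?m) y j) i"
    using Suc.prems by (intro AA_Wbar) auto
  also have "mat_vec L (Wbar N L E) (\<lambda>j. GG s (n + ?m) y j) i
      = mat_vec L (Wbar N L E) (\<lambda>j. (\<Prod>k<n. 1 - lam c \<gamma> (k + ?m)) * mat_vec L (matpow L (Wbar N L E) n) ?z j) i"
    by (rule mat_vec_cong) (rule Suc.IH)
  also have "\<dots> = (\<Prod>k<n. 1 - lam c \<gamma> (k + ?m)) * mat_vec L (matpow L (Wbar N L E) (Suc n)) ?z i"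
    by (simp add: mat_vec_scale mat_vec_mult)
  finally show ?case by (simp add: mult_ac)
qed

lemma prod_lim: "(\<lambda>n. \<Prod>k<n. 1 - lam c \<gamma> (k + m)) \<longlonglongrightarrow> (\<Prod>k. 1 - lam c \<gamma> (k + m))"
proof -
  have "summable (\<lambda>k. lam c \<gamma> (k + m))"
    using summable_ignore_initial_segment[OF summable_lam[OF gam, of c], where k=m] by simp
  moreover have "\<bar>- lam c \<gamma> (k + m)\<bar> = lam c \<gamma> (k + m)" for k
    using lam_pos[OF c0, of \<gamma> "k+m"] by simp
  ultimately have "summable (\<lambda>k. \<bar>- lam c \<gamma> (k + m)\<bar>)" by simp
  moreover have "- lam c \<gamma> (k + m) \<noteq> -1" for k using lam_lt1[OF c1 gam, of "k+m"] by simp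
  ultimately have "convergent_prod (\<lambda>k. 1 + - lam c \<gamma> (k + m))"
    by (rule summable_imp_convergent_prod_real)
  then have "convergent_prod (\<lambda>k. 1 - lam c \<gamma> (k + m))" by simp
  from convergent_prod_LIMSEQ[OF this] show ?thesis
    by (simp add: LIMSEQ_lessThan_iff_atMost)
qed

lemma prod_bounds: "0 \<le> (\<Prod>k<n. 1 - lam c \<gamma> (k + m)) \<and> (\<Prod>k<n. 1 - lam c \<gamma> (k + m)) \<le> 1"
  using lam_lt1[OF c1 gam] lam_pos[OF c0]
  by (auto intro!: prod_nonneg prod_le_1 simp: less_imp_le)

lemma Plam_bounds: "0 \<le> Plam c \<gamma> T s \<and> Plam c \<gamma> T s \<le> 1"
proof -
  have l: "(\<lambda>n. \<Prod>k<n. 1 - lam c \<gamma> (k + max s T)) \<longlonglongrightarrow> Plam c \<gamma> T s"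
    unfolding Plam_def by (rule prod_lim)
  have b: "\<exists>N. \<forall>n\<ge>N. 0 \<le> (\<Prod>k<n. 1 - lam c \<gamma> (k + max s T))" "\<exists>N. \<forall>n\<ge>N. (\<Prod>k<n. 1 - lam c \<gamma> (k + max s T)) \<le> 1"
    using prod_bounds by auto
  show ?thesis using LIMSEQ_le_const[OF l b(1)] LIMSEQ_le_const2[OF l b(2)] by simp
qed

lemma GG_lim: "i < L \<Longrightarrow> (\<lambda>t. GG s t y i) \<longlonglongrightarrow>
    Plam c \<gamma> TT s * (\<Sum>j<L. v j * mat_vec L (Qm N L E a c \<gamma> TT s) y j)"
proof -
  assume i: "i < L"
  let ?m = "max s TT"
  have "(\<lambda>n. mat_vec L (matpow L (Wbar N L E) n) (\<lambda>j. GG s ?m y j) i) \<longlonglongrightarrow> (\<Sum>j<L. v j * GG s ?m y j)"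
    unfolding mat_vec_def using vlim i by (intro tendsto_sum tendsto_mult_right) auto
  from tendsto_mult[OF prod_lim[of ?m] this]
  have "(\<lambda>n. GG s (n + ?m) y i) \<longlonglongrightarrow> Plam c \<gamma> TT s * (\<Sum>j<L. v j * GG s ?m y j)"
    unfolding Plam_def by (simp add: GG_far[OF i])
  then show ?thesis unfolding Qm_GG by (rule LIMSEQ_offset)
qed


lemma xtL_eq: "xtL_term N L E a c \<gamma> (\<lambda>j. x j 0) j k
   = Plam c \<gamma> TT (Suc k) * GG (Suc k) (max (Suc k) TT) (\<lambda>j. lam c \<gamma> k * x j 0) j"
  unfolding xtL_term_def Let_def Qm_GG by simp

lemma xtL_bound: "j < L \<Longrightarrow> \<bar>xtL_term N L E a c \<gamma> (\<lambda>j. x j 0) j k\<bar> \<le> lam c \<gamma> k * \<eta>"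
proof -
  assume j: "j < L"
  have g: "\<bar>GG (Suc k) (max (Suc k) TT) (\<lambda>j. lam c \<gamma> k * x j 0) j\<bar> \<le> lam c \<gamma> k * \<eta>"
  proof (rule GG_bound[OF j])
    fix l assume "l < L"
    then have "\<bar>x l 0\<bar> \<le> \<eta>" using bound LN by auto
    then show "\<bar>lam c \<gamma> k * x l 0\<bar> \<le> lam c \<gamma> k * \<eta>"
      using lam_pos[OF c0, of \<gamma> k] by (simp add: abs_mult mult_left_mono)
  qed
  have "\<bar>xtL_term N L E a c \<gamma> (\<lambda>j. x j 0) j k\<bar>
     = \<bar>Plam c \<gamma> TT (Suc k)\<bar> * \<bar>GG (Suc k) (max (Suc k) TT) (\<lambda>j. lam c \<gamma> k * x j 0) j\<bar>"
    unfolding xtL_eq by (simp add: abs_mult)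
  also have "\<dots> \<le> 1 * (lam c \<gamma> k * \<eta>)"
    using Plam_bounds[of TT "Suc k"] g by (intro mult_mono) auto
  finally show ?thesis by simp
qed

lemma xtL_summable: "j < L \<Longrightarrow> summable (xtL_term N L E a c \<gamma> (\<lambda>j. x j 0) j)"
  by (rule summable_comparison_test[where g="\<lambda>k. lam c \<gamma> k * \<eta>"])
     (auto simp: xtL_bound summable_lam[OF gam] intro: summable_mult2)

lemma uu_eq: "uu k = (\<lambda>l. (1 - lam c \<gamma> k) * (\<Sum>m\<in>{L..<N}. wt N E a l m k * x m k))"
  by (intro ext) (simp add: uu_def)

lemma lim_part1: "i < L \<Longrightarrow> (\<lambda>t. \<Sum>k<t. GG (Suc k) t (\<lambda>j. lam c \<gamma> k * x j 0) i)
   \<longlonglongrightarrow> (\<Sum>j<L. v j * (\<Sum>k. xtL_term N L E a c \<gamma> (\<lambda>j. x j 0) j k))"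
proof -
  assume i: "i < L"
  define w where "w k = (\<lambda>j. lam c \<gamma> k * x j 0)" for k
  define f where "f k t = (if k < t then GG (Suc k) t (w k) i else 0)" for k t
  define F where "F k = Plam c \<gamma> TT (Suc k) * (\<Sum>j<L. v j * mat_vec L (Qm N L E a c \<gamma> TT (Suc k)) (w k) j)" for k
  have wb: "\<bar>w k j\<bar> \<le> lam c \<gamma> k * \<eta>" if "j < L" for k j
  proof -
    have "\<bar>x j 0\<bar> \<le> \<eta>" using bound LN that by auto
    then show ?thesis unfolding w_def
      using lam_pos[OF c0, of \<gamma> k] by (simp add: abs_mult mult_left_mono)
  qed
  have lim: "(\<lambda>t. f k t) \<longlonglongrightarrow> F k" for k
  proof -
    have "(\<lambda>n. GG (Suc k) (n + Suc k) (w k) i) \<longlonglongrightarrow> F k"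
      unfolding F_def using LIMSEQ_ignore_initial_segment[OF GG_lim[OF i]] .
    then have "(\<lambda>n. f k (n + Suc k)) \<longlonglongrightarrow> F k" unfolding f_def by simp
    then show ?thesis by (rule LIMSEQ_offset)
  qed
  have bd: "eventually (\<lambda>(k, n). norm (f k n) \<le> lam c \<gamma> k * \<eta>) (at_top \<times>\<^sub>F sequentially)"
  proof (rule always_eventually, clarify)
    fix k n
    have "0 \<le> lam c \<gamma> k * \<eta>" using wb[where j=0 and k=k] i abs_ge_zero[of "w k 0"] by linarith
    then show "norm (f k n) \<le> lam c \<gamma> k * \<eta>"
      unfolding f_def using GG_bound[OF i wb] by auto
  qed
  from tannerys_theorem[OF lim bd summable_mult2[OF summable_lam[OF gam]]]
  have "(\<lambda>n. \<Sum>k. f k n) \<longlonglongrightarrow> (\<Sum>k. F k)" by simp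
  moreover have "(\<Sum>k. f k n) = (\<Sum>k<n. GG (Suc k) n (w k) i)" for n
    by (subst suminf_finite[of "{..<n}"]) (auto simp: f_def)
  moreover have "F k = (\<Sum>j<L. v j * xtL_term N L E a c \<gamma> (\<lambda>j. x j 0) j k)" for k
    unfolding F_def xtL_term_def Let_def w_def by (simp add: sum_distrib_left mult_ac)
  moreover have "(\<Sum>k. \<Sum>j<L. v j * xtL_term N L E a c \<gamma> (\<lambda>j. x j 0) j k)
      = (\<Sum>j<L. v j * (\<Sum>k. xtL_term N L E a c \<gamma> (\<lambda>j. x j 0) j k))"
    by (subst suminf_sum) (auto intro: summable_mult xtL_summable simp: suminf_mult xtL_summable)
  ultimately show ?thesis unfolding w_def by simp
qed

lemma lim_part2: "i < L \<Longrightarrow> (\<lambda>t. \<Sum>k<t. GG (Suc k) t (uu k) i)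
   \<longlonglongrightarrow> (\<Sum>j<L. v j * xtilde_M N L E a c \<gamma> x j)"
proof -
  assume i: "i < L"
  have "(\<lambda>t. \<Sum>k<TT. GG (Suc k) t (uu k) i) \<longlonglongrightarrow>
      (\<Sum>k<TT. Plam c \<gamma> TT (Suc k) * (\<Sum>j<L. v j * mat_vec L (Qm N L E a c \<gamma> TT (Suc k)) (uu k) j))"
    by (intro tendsto_sum GG_lim i)
  moreover have "eventually (\<lambda>t. (\<Sum>k<TT. GG (Suc k) t (uu k) i) = (\<Sum>k<t. GG (Suc k) t (uu k) i)) sequentially"
    unfolding eventually_sequentially
  proof (intro exI allI impI)
    fix t assume t: "TT \<le> t"
    have "(\<Sum>k<t. GG (Suc k) t (uu k) i) = (\<Sum>k<TT. GG (Suc k) t (uu k) i)"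
    proof (rule sum.mono_neutral_right)
      show "\<forall>k\<in>{..<t} - {..<TT}. GG (Suc k) t (uu k) i = 0"
      proof
        fix k assume "k \<in> {..<t} - {..<TT}"
        then have "TT \<le> k" by auto
        then have "GG (Suc k) t (uu k) i = GG (Suc k) t (\<lambda>_. 0) i"
          by (intro GG_cong) (simp add: uu_zero)
        then show "GG (Suc k) t (uu k) i = 0" by (simp add: GG_zero)
      qed
    qed (use t in auto)
    then show "(\<Sum>k<TT. GG (Suc k) t (uu k) i) = (\<Sum>k<t. GG (Suc k) t (uu k) i)" by simp
  qed
  ultimately have "(\<lambda>t. \<Sum>k<t. GG (Suc k) t (uu k) i) \<longlonglongrightarrow>
      (\<Sum>k<TT. Plam c \<gamma> TT (Suc k) * (\<Sum>j<L. v j * mat_vec L (Qm N L E a c \<gamma> TT (Suc k)) (uu k) j))"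
    by (rule Lim_transform_eventually)
  moreover have "(\<Sum>k<TT. Plam c \<gamma> TT (Suc k) * (\<Sum>j<L. v j * mat_vec L (Qm N L E a c \<gamma> TT (Suc k)) (uu k) j))
      = (\<Sum>j<L. v j * xtilde_M N L E a c \<gamma> x j)"
    unfolding xtilde_M_def Let_def uu_eq[symmetric]
    by (simp add: sum_distrib_left mult_ac) (rule sum.swap)
  ultimately show ?thesis by simp
qed

theorem det_main:
  "(\<forall>i<L. summable (xtL_term N L E a c \<gamma> (\<lambda>j. x j 0) i))
   \<and> (\<forall>i<L. (\<lambda>t. x i t) \<longlonglongrightarrow>
        (\<Sum>j<L. v j * (xtilde_L N L E a c \<gamma> (\<lambda>j. x j 0) j + xtilde_M N L E a c \<gamma> (\<lambda>m k. x m k) j)))"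
proof (intro conjI allI impI)
  fix i assume i: "i < L"
  show "summable (xtL_term N L E a c \<gamma> (\<lambda>j. x j 0) i)" by (rule xtL_summable[OF i])
  have "(\<lambda>t. GG 0 t (\<lambda>j. x j 0) i + (\<Sum>k<t. GG (Suc k) t (\<lambda>j. lam c \<gamma> k * x j 0) i) + (\<Sum>k<t. GG (Suc k) t (uu k) i))
     \<longlonglongrightarrow> Plam c \<gamma> TT 0 * (\<Sum>j<L. v j * mat_vec L (Qm N L E a c \<gamma> TT 0) (\<lambda>j. x j 0) j)
        + (\<Sum>j<L. v j * (\<Sum>k. xtL_term N L E a c \<gamma> (\<lambda>j. x j 0) j k))
        + (\<Sum>j<L. v j * xtilde_M N L E a c \<gamma> x j)"
    by (intro tendsto_add GG_lim lim_part1 lim_part2 i)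
  moreover have "Plam c \<gamma> TT 0 * (\<Sum>j<L. v j * mat_vec L (Qm N L E a c \<gamma> TT 0) (\<lambda>j. x j 0) j)
        + (\<Sum>j<L. v j * (\<Sum>k. xtL_term N L E a c \<gamma> (\<lambda>j. x j 0) j k))
        + (\<Sum>j<L. v j * xtilde_M N L E a c \<gamma> x j)
     = (\<Sum>j<L. v j * (xtilde_L N L E a c \<gamma> (\<lambda>j. x j 0) j + xtilde_M N L E a c \<gamma> (\<lambda>m k. x m k) j))"
    unfolding xtilde_L_def Let_def
    by (simp add: sum_distrib_left distrib_left sum.distrib mult_ac)
  ultimately show "(\<lambda>t. x i t) \<longlonglongrightarrow>
        (\<Sum>j<L. v j * (xtilde_L N L E a c \<gamma> (\<lambda>j. x j 0) j + xtilde_M N L E a c \<gamma> (\<lambda>m k. x m k) j))"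
    using solution[OF i] by simp
qed

end

end


theorem mainTheorem1:
  fixes M :: "'a measure"
    and N L :: nat
    and E :: "nat \<Rightarrow> nat \<Rightarrow> bool"
    and alpha :: "nat \<Rightarrow> nat \<Rightarrow> nat \<Rightarrow> 'a \<Rightarrow> real"
    and x :: "nat \<Rightarrow> nat \<Rightarrow> 'a \<Rightarrow> real"
    and c \<gamma> \<eta> EL EM :: real
    and v :: "nat \<Rightarrow> real"
  assumes P: "prob_space M"
    and LN: "0 < L" "L \<le> N"
    and conn: "\<forall>i<L. \<forall>j<L. (\<lambda>p q. p < L \<and> q < L \<and> E p q)\<^sup>*\<^sup>* i j"
    and c: "0 < c" "c < 1" and gam: "0 < \<gamma>"
    and bound: "\<forall>i<N. \<forall>t. \<forall>\<omega>\<in>space M. \<bar>x i t \<omega>\<bar> \<le> \<eta>"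
    and meas: "\<forall>i<L. \<forall>j\<in>nbrs N E i. \<forall>t. alpha i j t \<in> borel_measurable M"
    and range: "\<forall>i<L. \<forall>j\<in>nbrs N E i. \<forall>t. \<forall>\<omega>\<in>space M. 0 \<le> alpha i j t \<omega> \<and> alpha i j t \<omega> \<le> 1"
    and indep: "\<forall>i<L. \<forall>j\<in>nbrs N E i.
                  prob_space.indep_vars M (\<lambda>_. borel) (\<lambda>t. alpha i j t) UNIV"
    and meanL: "\<forall>i<L. \<forall>j\<in>nbrs N E i. j < L \<longrightarrow>
                  (\<forall>t. prob_space.expectation M (alpha i j t) - 1/2 = EL)"
    and meanM: "\<forall>i<L. \<forall>j\<in>nbrs N E i. L \<le> j \<longrightarrow>
                  (\<forall>t. prob_space.expectation M (alpha i j t) - 1/2 = EM)"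
    and EL: "EL > 0" and EM: "EM < 0"
    and protocol: "\<forall>\<omega>\<in>space M. \<forall>i<L. \<forall>t.
        x i (Suc t) \<omega> = lam c \<gamma> t * x i 0 \<omega>
          + (1 - lam c \<gamma> t) * (\<Sum>j\<in>insert i (nbrs N E i).
                 wt N E (\<lambda>p q s. alpha p q s \<omega>) i j t * x j t \<omega>)"
    and v_stoch: "\<forall>j<L. 0 \<le> v j" "(\<Sum>j<L. v j) = 1"
    and v_lim: "\<forall>i<L. \<forall>j<L. (\<lambda>n. matpow L (Wbar N L E) n i j) \<longlonglongrightarrow> v j"
  shows "AE \<omega> in M.
           (\<forall>i<L. summable (xtL_term N L E (\<lambda>p q s. alpha p q s \<omega>) c \<gamma> (\<lambda>j. x j 0 \<omega>) i))
         \<and> (\<forall>i<L. (\<lambda>t. x i t \<omega>) \<longlonglongrightarrow>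
               (\<Sum>j<L. v j * (xtilde_L N L E (\<lambda>p q s. alpha p q s \<omega>) c \<gamma> (\<lambda>j. x j 0 \<omega>) j
                             + xtilde_M N L E (\<lambda>p q s. alpha p q s \<omega>) c \<gamma> (\<lambda>m k. x m k \<omega>) j)))"
proof -
  interpret prob_space M by (rule P)
  have ae1: "AE \<omega> in M. \<forall>i\<in>{..<L}. \<forall>j\<in>nbrs N E i. eventually (\<lambda>t.
      (j < L \<longrightarrow> 0 \<le> beta (\<lambda>p q s. alpha p q s \<omega>) i j t) \<and> (L \<le> j \<longrightarrow> beta (\<lambda>p q s. alpha p q s \<omega>) i j t < 0)) sequentially"
  proof (intro AE_finite_allI finite_nbrs finite_lessThan)
    fix i j assume i: "i \<in> {..<L}" and j: "j \<in> nbrs N E i"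
    show "AE \<omega> in M. eventually (\<lambda>t.
      (j < L \<longrightarrow> 0 \<le> beta (\<lambda>p q s. alpha p q s \<omega>) i j t) \<and> (L \<le> j \<longrightarrow> beta (\<lambda>p q s. alpha p q s \<omega>) i j t < 0)) sequentially"
    proof (cases "j < L")
      case True
      have "AE \<omega> in M. eventually (\<lambda>n. (\<Sum>s\<le>n. alpha i j s \<omega> - 1/2) > 0) sequentially"
        by (rule hoeff_pos[OF P, where e=EL]) (use i j True meas range indep meanL EL in auto)
      moreover have "\<not> L \<le> j" using True by simp
      ultimately show ?thesis
        by (auto elim!: AE_mp intro!: AE_I2 elim!: eventually_mono simp: beta_def)
    next
      case False
      have "AE \<omega> in M. eventually (\<lambda>n. (\<Sum>s\<le>n. alpha i j s \<omega> - 1/2) < 0) sequentially"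
        by (rule hoeff_neg[OF P, where e=EM]) (use i j False meas range indep meanM EM in auto)
      then show ?thesis
        by (rule AE_mp) (auto intro!: AE_I2 elim: eventually_mono simp: beta_def \<open>\<not> j < L\<close>)
    qed
  qed
  show ?thesis
  proof (rule AE_mp[OF ae1], rule AE_I2, rule impI)
    fix \<omega> assume \<omega>: "\<omega> \<in> space M"
      and ev: "\<forall>i\<in>{..<L}. \<forall>j\<in>nbrs N E i. eventually (\<lambda>t.
      (j < L \<longrightarrow> 0 \<le> beta (\<lambda>p q s. alpha p q s \<omega>) i j t) \<and> (L \<le> j \<longrightarrow> beta (\<lambda>p q s. alpha p q s \<omega>) i j t < 0)) sequentially"
    show "(\<forall>i<L. summable (xtL_term N L E (\<lambda>p q s. alpha p q s \<omega>) c \<gamma> (\<lambda>j. x j 0 \<omega>) i))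
         \<and> (\<forall>i<L. (\<lambda>t. x i t \<omega>) \<longlonglongrightarrow>
               (\<Sum>j<L. v j * (xtilde_L N L E (\<lambda>p q s. alpha p q s \<omega>) c \<gamma> (\<lambda>j. x j 0 \<omega>) j
                             + xtilde_M N L E (\<lambda>p q s. alpha p q s \<omega>) c \<gamma> (\<lambda>m k. x m k \<omega>) j)))"
    proof (rule det_main[where x="\<lambda>m k. x m k \<omega>"])
      show "\<forall>i<N. \<forall>t. \<bar>x i t \<omega>\<bar> \<le> \<eta>" using bound \<omega> by auto
      show "\<forall>i<L. \<forall>t. x i (Suc t) \<omega> = lam c \<gamma> t * x i 0 \<omega>
          + (1 - lam c \<gamma> t) * (\<Sum>j\<in>insert i (nbrs N E i). wt N E (\<lambda>p q s. alpha p q s \<omega>) i j t * x j t \<omega>)"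
        using protocol \<omega> by auto
      show "\<forall>i<L. \<forall>j\<in>nbrs N E i. eventually (\<lambda>t. (j < L \<longrightarrow> 0 \<le> beta (\<lambda>p q s. alpha p q s \<omega>) i j t)
           \<and> (L \<le> j \<longrightarrow> beta (\<lambda>p q s. alpha p q s \<omega>) i j t < 0)) sequentially"
        using ev by auto
    qed (use LN c gam v_lim in auto)
  qed
qed

end
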